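(* Let $n_0,n_1$ be positive integers with $\max\{n_0,n_1\}>1$ and let $r>1$ be an integer. Then every subset $\mathcal{Z}\subseteq\{1,2,\dots,r-1\}$ is admissible for $(n_0,n_1,r)$.
   Context: For integers $n,\ell>0$ and a finite-support integer sequence $\mu=(\mu_i)_{i\ge1}$, $\mathsf{K}_\ell(\mu,n)=n^\ell-\sum_{i=1}^{\ell}\mu_i n^{\ell-i}$ (with $0^0=1$). For a pair $(\eta,\omega)$ of nonnegative integer sequences $(\eta_\ell)_{\ell\ge1},(\omega_\ell)_{\ell\ge1}$ with finite support, let $\mathsf{K}^\pm_\ell=\mathsf{K}_\ell(\eta\pm\omega,n_0\pm n_1)$, let $\mathsf{r}(\eta,\omega)$ be the largest index in the union of their supports, and $\mathsf{K}^\pm=\mathsf{K}^\pm_{\mathsf{r}(\eta,\omega)}$. A subset $\mathcal{Z}\subseteq\{1,\dots,r-1\}$ is admissible for $(n_0,n_1,r)$ if there exists such a pair $(\eta,\omega)$ with $\mathsf{r}(\eta,\omega)=r$ and $\mathsf{K}^+=\mathsf{K}^-=0$ such that, for $\ell\in\{1,\dots,r-1\}$, the inequality $\mathsf{K}^+_\ell\ge|\mathsf{K}^-_\ell|$ fails exactly when $\ell\in\mathcal{Z}$. *)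

theory Defs
  imports Main
begin

text \<open>K_l(mu,n) = n^l - sum_{i=1}^l mu_i n^(l-i), integer-valued (0^0 = 1 in Isabelle).\<close>
definition Kf :: "nat \<Rightarrow> (nat \<Rightarrow> int) \<Rightarrow> int \<Rightarrow> int" where
  "Kf l mu n = n ^ l - (\<Sum>i = 1..l. mu i * n ^ (l - i))"

text \<open>Support of a sequence indexed by positive integers (index 0 is not part of the sequence).\<close>
definition supp_seq :: "(nat \<Rightarrow> nat) \<Rightarrow> nat set" where
  "supp_seq f = {i. 1 \<le> i \<and> f i \<noteq> 0}"

definition rk :: "(nat \<Rightarrow> nat) \<Rightarrow> (nat \<Rightarrow> nat) \<Rightarrow> nat" where
  "rk eta omega = Max (supp_seq eta \<union> supp_seq omega)"

definition Kplus :: "nat \<Rightarrow> nat \<Rightarrow> (nat \<Rightarrow> nat) \<Rightarrow> (nat \<Rightarrow> nat) \<Rightarrow> nat \<Rightarrow> int" where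
  "Kplus n0 n1 eta omega l = Kf l (\<lambda>i. int (eta i) + int (omega i)) (int n0 + int n1)"

definition Kminus :: "nat \<Rightarrow> nat \<Rightarrow> (nat \<Rightarrow> nat) \<Rightarrow> (nat \<Rightarrow> nat) \<Rightarrow> nat \<Rightarrow> int" where
  "Kminus n0 n1 eta omega l = Kf l (\<lambda>i. int (eta i) - int (omega i)) (int n0 - int n1)"

definition admissible :: "nat \<Rightarrow> nat \<Rightarrow> nat \<Rightarrow> nat set \<Rightarrow> bool" where
  "admissible n0 n1 r Z \<longleftrightarrow> Z \<subseteq> {1..r-1} \<and>
     (\<exists>eta omega.
        finite (supp_seq eta) \<and> finite (supp_seq omega) \<and>
        supp_seq eta \<union> supp_seq omega \<noteq> {} \<and>
        rk eta omega = r \<and>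
        Kplus n0 n1 eta omega r = 0 \<and> Kminus n0 n1 eta omega r = 0 \<and>
        (\<forall>l \<in> {1..r-1}. (\<not> (Kplus n0 n1 eta omega l \<ge> \<bar>Kminus n0 n1 eta omega l\<bar>)) \<longleftrightarrow> l \<in> Z))"

end

theory Submission
  imports Defs
begin

lemma Kf_0: "Kf 0 mu n = 1" by (simp add: Kf_def)

lemma Kf_Suc: "Kf (Suc l) mu n = n * Kf l mu n - mu (Suc l)"
proof -
  have "(\<Sum>i = 1..Suc l. mu i * n ^ (Suc l - i)) = (\<Sum>i = 1..l. mu i * n ^ (Suc l - i)) + mu (Suc l)"
    by simp
  also have "(\<Sum>i = 1..l. mu i * n ^ (Suc l - i)) = n * (\<Sum>i = 1..l. mu i * n ^ (l - i))"
    unfolding sum_distrib_left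
    by (rule sum.cong) (auto simp: Suc_diff_le)
  finally show ?thesis unfolding Kf_def by (simp add: algebra_simps)
qed

definition bstep :: "int \<Rightarrow> int \<Rightarrow> int \<times> int \<Rightarrow> int \<times> int" where
 "bstep N M pq = (let P = fst pq; Q = snd pq; a = (N*P - \<bar>M*Q\<bar>) div 2 + 1;
    s = (if M*Q \<ge> 0 then 1 else -1) in (N*P - a, M*Q + s*a))"

definition gstep :: "int \<Rightarrow> int \<Rightarrow> int \<times> int \<Rightarrow> int \<times> int" where
 "gstep N M pq = (N * fst pq, M * snd pq)"

primrec stt :: "int \<Rightarrow> int \<Rightarrow> nat set \<Rightarrow> nat \<Rightarrow> int \<times> int" where
 "stt N M Z 0 = (1,1)"
| "stt N M Z (Suc l) = (if Suc l \<in> Z then bstep N M (stt N M Z l) else gstep N M (stt N M Z l))"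

definition invt :: "int \<Rightarrow> int \<Rightarrow> int \<times> int \<Rightarrow> bool" where
 "invt N M pq = (fst pq \<ge> 1 \<and> N * fst pq - \<bar>M\<bar> * \<bar>snd pq\<bar> \<ge> 0 \<and>
    (N - \<bar>M\<bar>) * ((N * fst pq - \<bar>M\<bar> * \<bar>snd pq\<bar>) div 2 + \<bar>M\<bar> * \<bar>snd pq\<bar>) \<ge> N + \<bar>M\<bar> \<and>
    even (fst pq - snd pq))"

locale NM =
  fixes N M :: int
  assumes N3: "N \<ge> 3" and NM2: "N - \<bar>M\<bar> \<ge> 2" and NMev: "even (N - M)"
begin

lemma inv0: "invt N M (1,1)"
proof -
  let ?m = "\<bar>M\<bar>"
  have "(N - ?m) div 2 \<ge> 1" using NM2 by simp
  hence "(N - ?m) * ((N - ?m) div 2 + ?m) \<ge> (N - ?m) * (1 + ?m)"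
    using NM2 by (intro mult_left_mono) auto
  moreover have "(N - ?m) * (1 + ?m) \<ge> N + ?m"
  proof -
    have "(N - ?m) * ?m \<ge> 2 * ?m" using NM2 by (intro mult_right_mono) auto
    thus ?thesis by (simp add: algebra_simps)
  qed
  ultimately have "(N - ?m) * ((N - ?m) div 2 + ?m) \<ge> N + ?m" by linarith
  thus ?thesis unfolding invt_def using NM2 by simp
qed

lemma good_inv:
  assumes "invt N M (P,Q)"
  shows "invt N M (gstep N M (P,Q))" and "fst (gstep N M (P,Q)) \<ge> \<bar>snd (gstep N M (P,Q))\<bar>"
proof -
  let ?m = "\<bar>M\<bar>" and ?u = "\<bar>Q\<bar>"
  from assms have P1: "P \<ge> 1" and D0: "N*P - ?m*?u \<ge> 0"
    and C: "(N - ?m) * ((N*P - ?m*?u) div 2 + ?m*?u) \<ge> N + ?m" and ev: "even (P - Q)"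
    unfolding invt_def by auto
  define D where "D = N*P - ?m*?u"
  have D': "N*(N*P) - ?m * (?m*?u) = N*D + ?m*?u*(N - ?m)" unfolding D_def by algebra
  have mu0: "?m*?u \<ge> 0" by simp
  have "?m*?u*(N - ?m) \<ge> 0" using NM2 by simp
  moreover have "N*D \<ge> 1*D" using N3 D0 unfolding D_def by (intro mult_right_mono) auto
  ultimately have DD: "N*(N*P) - ?m * (?m*?u) \<ge> D" using D' by linarith
  have mm: "?m * (?m*?u) \<ge> ?m*?u"
  proof (cases "?m = 0")
    case False then have "?m \<ge> 1" by simp
    hence "?m * (?m*?u) \<ge> 1 * (?m*?u)" using mu0 by (intro mult_right_mono) auto
    thus ?thesis by simp
  qed simp
  have V: "(N*(N*P) - ?m * (?m*?u)) div 2 + ?m * (?m*?u) \<ge> D div 2 + ?m*?u"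
    using DD mm zdiv_mono1[OF DD, of 2] by linarith
  have "(N - ?m) * ((N*(N*P) - ?m * (?m*?u)) div 2 + ?m * (?m*?u)) \<ge> (N - ?m) * (D div 2 + ?m*?u)"
    using V NM2 by (intro mult_left_mono) auto
  hence C': "(N - ?m) * ((N*(N*P) - ?m * (?m*?u)) div 2 + ?m * (?m*?u)) \<ge> N + ?m"
    using C unfolding D_def by linarith
  have "N*P \<ge> 3*1" using N3 P1 by (intro mult_mono) auto
  hence NP1: "N*P \<ge> 1" by simp
  have ev': "even (N*P - M*Q)"
  proof -
    have "N*P - M*Q = (N - M)*P + M*(P - Q)" by algebra
    thus ?thesis using ev NMev by simp
  qed
  show "invt N M (gstep N M (P,Q))"
    unfolding invt_def gstep_def using C' DD D0 NP1 ev' unfolding D_def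
    by (simp add: abs_mult mult.assoc)
  show "fst (gstep N M (P,Q)) \<ge> \<bar>snd (gstep N M (P,Q))\<bar>"
    unfolding gstep_def using D0 by (simp add: abs_mult)
qed

lemma bad_inv:
  assumes "invt N M (P,Q)"
  shows "invt N M (bstep N M (P,Q))" and "fst (bstep N M (P,Q)) < \<bar>snd (bstep N M (P,Q))\<bar>"
    and "N*P - fst (bstep N M (P,Q)) \<ge> \<bar>M*Q - snd (bstep N M (P,Q))\<bar>"
proof -
  let ?m = "\<bar>M\<bar>" and ?u = "\<bar>Q\<bar>"
  from assms have P1: "P \<ge> 1" and D0: "N*P - ?m*?u \<ge> 0"
    and C: "(N - ?m) * ((N*P - ?m*?u) div 2 + ?m*?u) \<ge> N + ?m" and ev: "even (P - Q)"
    unfolding invt_def by auto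
  define D where "D = N*P - ?m*?u"
  define k where "k = D div 2"
  define e where "e = D mod 2"
  have De: "D = 2*k + e" unfolding k_def e_def by simp
  have e01: "0 \<le> e" "e \<le> 1" unfolding e_def by auto
  define a where "a = k + 1"
  define s :: int where "s = (if M*Q \<ge> 0 then 1 else -1)"
  define P' where "P' = N*P - a"
  define Q' where "Q' = M*Q + s*a"
  have bs: "bstep N M (P,Q) = (P', Q')"
    unfolding bstep_def P'_def Q'_def a_def k_def D_def s_def by (simp add: abs_mult Let_def)
  have k0: "k \<ge> 0" using D0 unfolding k_def D_def by simp
  have absQ': "\<bar>Q'\<bar> = ?m*?u + a"
    unfolding Q'_def s_def a_def using k0 by (auto simp: abs_mult[symmetric])
  have "N*P \<ge> 3*1" using N3 P1 by (intro mult_mono) auto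
  hence NP3: "N*P \<ge> 3" by simp
  have mu0: "?m*?u \<ge> 0" by simp
  have P'1: "P' \<ge> 1" unfolding P'_def a_def using De e01 mu0 NP3 unfolding D_def by linarith
  have D'eq: "N*P' - ?m*(?m*?u + a) = (N - ?m)*(k + ?m*?u) - (N + ?m) + N*e"
  proof -
    have NP: "N*P = 2*k + e + ?m*?u" using De unfolding D_def by simp
    have "N*P' - ?m*(?m*?u + a) = N*(N*P) - N*(k+1) - ?m*(?m*?u + (k+1))" unfolding P'_def a_def by algebra
    also have "... = N*(2*k + e + ?m*?u) - N*(k+1) - ?m*(?m*?u + (k+1))" by (simp only: NP)
    also have "... = (N - ?m)*(k + ?m*?u) - (N + ?m) + N*e" by algebra
    finally show ?thesis .
  qed
  have Ne: "N*e \<ge> 0" using N3 e01 by simp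
  have D'0: "N*P' - ?m*(?m*?u + a) \<ge> 0" using D'eq C Ne unfolding k_def D_def by linarith
  have C': "(N - ?m) * ((N*P' - ?m*(?m*?u + a)) div 2 + ?m*(?m*?u + a)) \<ge> N + ?m"
  proof (cases "?m = 0")
    case True
    have "N*P' \<ge> 3*1" using N3 P'1 by (intro mult_mono) auto
    hence "(N*P' - ?m*(?m*?u + a)) div 2 \<ge> 1" using True by simp
    thus ?thesis using True N3 by simp
  next
    case False
    hence m1: "?m \<ge> 1" by simp
    have au: "?m*?u + a \<ge> 0" using mu0 k0 a_def by simp
    have "?m*(?m*?u + a) \<ge> 1*(?m*?u + a)" using m1 au by (intro mult_right_mono) auto
    hence "?m*(?m*?u + a) \<ge> ?m*?u + a" by simp
    moreover have "(N*P' - ?m*(?m*?u + a)) div 2 \<ge> 0" using D'0 by simp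
    ultimately have "(N*P' - ?m*(?m*?u + a)) div 2 + ?m*(?m*?u + a) \<ge> k + ?m*?u"
      unfolding a_def by linarith
    hence "(N - ?m) * ((N*P' - ?m*(?m*?u + a)) div 2 + ?m*(?m*?u + a)) \<ge> (N - ?m) * (k + ?m*?u)"
      using NM2 by (intro mult_left_mono) auto
    thus ?thesis using C unfolding k_def D_def by linarith
  qed
  have ev': "even (P' - Q')"
  proof -
    have "P' - Q' = (N - M)*P + M*(P - Q) - (1 + s)*a" unfolding P'_def Q'_def by algebra
    moreover have "even ((1 + s)*a)" unfolding s_def by auto
    ultimately show ?thesis using ev NMev by simp
  qed
  show "invt N M (bstep N M (P,Q))" unfolding bs invt_def using P'1 D'0 C' ev' absQ' by simp
  show "fst (bstep N M (P,Q)) < \<bar>snd (bstep N M (P,Q))\<bar>"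
    using absQ' De e01 unfolding bs P'_def a_def D_def by simp
  show "N*P - fst (bstep N M (P,Q)) \<ge> \<bar>M*Q - snd (bstep N M (P,Q))\<bar>"
    using k0 unfolding bs P'_def Q'_def s_def a_def by auto
qed

lemma stt_inv: "invt N M (stt N M Z l)"
proof (induction l)
  case 0 then show ?case using inv0 by simp
next
  case (Suc l)
  obtain P Q where pq: "stt N M Z l = (P,Q)" by fastforce
  show ?case using Suc good_inv(1) bad_inv(1) unfolding pq by (simp add: pq)
qed

lemma stt_par: "even (N * fst (stt N M Z l) - M * snd (stt N M Z l))"
proof -
  have e: "even (fst (stt N M Z l) - snd (stt N M Z l))" using stt_inv[of Z l] unfolding invt_def by simp
  have "N * fst (stt N M Z l) - M * snd (stt N M Z l) = (N - M) * fst (stt N M Z l) + M * (fst (stt N M Z l) - snd (stt N M Z l))"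
    by algebra
  thus ?thesis using e NMev by simp
qed

end

theorem mainTheorem8:
  fixes n0 n1 r :: nat and Z :: "nat set"
  assumes "0 < n0" and "0 < n1" and "max n0 n1 > 1" and "r > 1"
    and "Z \<subseteq> {1..r-1}"
  shows "admissible n0 n1 r Z"
proof -
  define N where "N = int n0 + int n1"
  define M where "M = int n0 - int n1"
  have N3: "N \<ge> 3" using assms(1-3) unfolding N_def by auto
  have NM2: "N - \<bar>M\<bar> \<ge> 2" using assms(1,2) unfolding N_def M_def by auto
  have NMev: "even (N - M)" unfolding N_def M_def by simp
  interpret NM N M using N3 NM2 NMev by unfold_locales
  define Pf where "Pf l = (if l < r then fst (stt N M Z l) else 0)" for l
  define Qf where "Qf l = (if l < r then snd (stt N M Z l) else 0)" for l
  define A where "A l = (if 1 \<le> l \<and> l \<le> r then N * Pf (l-1) - Pf l else 0)" for l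
  define B where "B l = (if 1 \<le> l \<and> l \<le> r then M * Qf (l-1) - Qf l else 0)" for l
  have AB: "A l \<ge> \<bar>B l\<bar> \<and> even (A l - B l)" for l
  proof (cases "1 \<le> l \<and> l \<le> r")
    case False
    hence "A l = 0" "B l = 0" unfolding A_def B_def by (simp_all only: if_False)
    then show ?thesis by simp
  next
    case True
    then obtain j where j: "l = Suc j" "j < r" by (cases l) auto
    obtain P Q where pq: "stt N M Z j = (P,Q)" by fastforce
    have iv: "invt N M (P,Q)" using stt_inv[of Z j] pq by simp
    have pj: "even (N*P - M*Q)" using stt_par[of Z j] pq by simp
    show ?thesis
    proof (cases "l < r")
      case lr: True
      have e2: "even (Pf l - Qf l)" using stt_inv[of Z l] lr unfolding Pf_def Qf_def invt_def by simp
      have "A l - B l = (N*P - M*Q) - (Pf l - Qf l)" unfolding A_def B_def Pf_def Qf_def using True j pq lr by simp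
      hence par: "even (A l - B l)" using e2 pj by simp
      show ?thesis
      proof (cases "l \<in> Z")
        case inZ: True
        have "A l = N*P - fst (bstep N M (P,Q))" "B l = M*Q - snd (bstep N M (P,Q))"
          unfolding A_def B_def Pf_def Qf_def using True j pq lr inZ by auto
        thus ?thesis using bad_inv(3)[OF iv] par by simp
      next
        case False
        have "A l = 0" "B l = 0"
          unfolding A_def B_def Pf_def Qf_def using True j pq lr False by (auto simp: gstep_def)
        thus ?thesis by simp
      qed
    next
      case False
      hence lr: "l = r" using True by simp
      have "A l = N*P" "B l = M*Q" unfolding A_def B_def Pf_def Qf_def using lr j pq by auto
      thus ?thesis using iv pj unfolding invt_def by (simp add: abs_mult)
    qed
  qed
  define eta where "eta l = nat ((A l + B l) div 2)" for l
  define omega where "omega l = nat ((A l - B l) div 2)" for l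
  have ABsum: "int (eta l) + int (omega l) = A l" and ABdif: "int (eta l) - int (omega l) = B l" for l
  proof -
    have h: "A l \<ge> \<bar>B l\<bar>" "even (A l - B l)" using AB[of l] by auto
    have h2: "even (A l + B l)" using h(2) by (metis even_diff)
    obtain c where c: "A l + B l = 2*c" using h2 by (rule evenE)
    obtain d where d: "A l - B l = 2*d" using h(2) by (rule evenE)
    have hb: "- A l \<le> B l" "B l \<le> A l" using h(1) by (auto simp: abs_le_iff)
    have c0: "c \<ge> 0" "d \<ge> 0" using c d hb by linarith+
    have "(A l + B l) div 2 = c" "(A l - B l) div 2 = d" using c d by simp_all
    hence "int (eta l) = c" "int (omega l) = d" unfolding eta_def omega_def using c0 by simp_all
    thus "int (eta l) + int (omega l) = A l" "int (eta l) - int (omega l) = B l"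
      using c d by auto
  qed
  have Kp: "Kplus n0 n1 eta omega l = Pf l \<and> Kminus n0 n1 eta omega l = Qf l" if "l \<le> r" for l
    using that
  proof (induction l)
    case 0 then show ?case using assms(4) unfolding Kplus_def Kminus_def Pf_def Qf_def by (simp add: Kf_0)
  next
    case (Suc l)
    hence IH: "Kplus n0 n1 eta omega l = Pf l" "Kminus n0 n1 eta omega l = Qf l" by auto
    have "Kplus n0 n1 eta omega (Suc l) = N * Pf l - A (Suc l)"
      using IH(1) unfolding Kplus_def N_def by (simp add: Kf_Suc ABsum)
    moreover have "Kminus n0 n1 eta omega (Suc l) = M * Qf l - B (Suc l)"
      using IH(2) unfolding Kminus_def M_def by (simp add: Kf_Suc ABdif)
    ultimately show ?case using Suc.prems unfolding A_def B_def by simp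
  qed
  have zero_out: "eta l = 0 \<and> omega l = 0" if "\<not> (1 \<le> l \<and> l \<le> r)" for l
  proof -
    have "A l = 0" "B l = 0" using that unfolding A_def B_def by (simp_all only: if_False)
    thus ?thesis unfolding eta_def omega_def by simp
  qed
  have Ar: "A r > 0"
  proof -
    have "fst (stt N M Z (r-1)) \<ge> 1" using stt_inv[of Z "r-1"] unfolding invt_def by simp
    hence "N * fst (stt N M Z (r-1)) \<ge> 3*1" using N3 by (intro mult_mono) auto
    thus ?thesis unfolding A_def Pf_def using assms(4) by simp
  qed
  have suppsub: "supp_seq eta \<union> supp_seq omega \<subseteq> {1..r}"
  proof
    fix x assume x: "x \<in> supp_seq eta \<union> supp_seq omega"
    show "x \<in> {1..r}"
    proof (rule ccontr)
      assume "x \<notin> {1..r}"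
      hence "eta x = 0 \<and> omega x = 0" using zero_out[of x] by auto
      thus False using x unfolding supp_seq_def by auto
    qed
  qed
  have fin: "finite (supp_seq eta)" "finite (supp_seq omega)"
    using suppsub by (auto intro: finite_subset)
  have rin: "r \<in> supp_seq eta \<union> supp_seq omega"
  proof -
    have "int (eta r) + int (omega r) > 0" using Ar ABsum[of r] by simp
    hence "eta r \<noteq> 0 \<or> omega r \<noteq> 0" by auto
    thus ?thesis unfolding supp_seq_def using assms(4) by auto
  qed
  have rk: "rk eta omega = r"
    unfolding rk_def
    by (rule Max_eqI) (use fin suppsub rin in auto)
  have Kr: "Kplus n0 n1 eta omega r = 0" "Kminus n0 n1 eta omega r = 0"
    using Kp[of r] unfolding Pf_def Qf_def by auto
  have cond: "(\<not> (Kplus n0 n1 eta omega l \<ge> \<bar>Kminus n0 n1 eta omega l\<bar>)) \<longleftrightarrow> l \<in> Z"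
    if l: "l \<in> {1..r-1}" for l
  proof -
    from l obtain j where j: "l = Suc j" by (cases l) auto
    have lr: "l < r" using l assms(4) by auto
    obtain P Q where pq: "stt N M Z j = (P,Q)" by fastforce
    have iv: "invt N M (P,Q)" using stt_inv[of Z j] pq by simp
    have K: "Kplus n0 n1 eta omega l = fst (stt N M Z l)" "Kminus n0 n1 eta omega l = snd (stt N M Z l)"
      using Kp[of l] lr unfolding Pf_def Qf_def by auto
    show ?thesis
    proof (cases "l \<in> Z")
      case True
      then show ?thesis using K bad_inv(2)[OF iv] j pq by auto
    next
      case False
      then show ?thesis using K good_inv(2)[OF iv] j pq by auto
    qed
  qed
  show ?thesis unfolding admissible_def
    using assms(5) fin rin rk Kr cond by blast
qed
end
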